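(* Let $0\le q_0<q_1\le 1$, let $f_N^{(i)}$ and $F_N^{(i)}$ denote the probability mass function and cumulative distribution function of the binomial distribution $\mathrm{Bin}(N,q_i)$, $i\in\{0,1\}$, and let $N_R=N_R(N)$ be positive integers with $N_R\in\mathcal O(N)$. Define $$S_N=\sum_{k=1}^{N} f_N^{(1)}[k]\,\big(F_N^{(0)}[k-1]\big)^{N_R}.$$ Then $\lim_{N\to\infty}S_N=1$. *)

theory Defs
  imports "HOL-Probability.Probability" "HOL-Library.Landau_Symbols"
begin

definition binom_f :: "nat \<Rightarrow> real \<Rightarrow> nat \<Rightarrow> real" where
  "binom_f N q k = pmf (binomial_pmf N q) k"

definition binom_F :: "nat \<Rightarrow> real \<Rightarrow> nat \<Rightarrow> real" where
  "binom_F N q k = measure_pmf.prob (binomial_pmf N q) {..k}"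

end

theory Submission
  imports Defs "HOL-Real_Asymp.Real_Asymp"
begin

lemma key_lower:
  fixes q0 q1 :: real and N m :: nat
  assumes q0: "0 \<le> q0" and q01: "q0 < q1" and q1: "q1 \<le> 1" and N: "N > 0"
  shows "1 - (1 + real m) * exp (-2 * real N * ((q1 - q0)/4)^2)
           \<le> (\<Sum>k=1..N. binom_f N q1 k * (binom_F N q0 (k - 1)) ^ m)"
proof -
  define d where "d = (q1 - q0)/4"
  define e where "e = exp (-2 * real N * d^2)"
  have d: "d > 0" using q01 by (simp add: d_def)
  have e0: "e \<ge> 0" by (simp add: e_def)
  interpret b0: binomial_distribution N q0 by unfold_locales (use q0 q01 q1 in auto)
  interpret b1: binomial_distribution N q1 by unfold_locales (use q0 q01 q1 in auto)
  define c where "c = q0 + 2 * d"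
  have c2: "c = q1 - 2 * d" unfolding c_def d_def by (simp add: field_simps)
  define B where "B = {k\<in>{1..N}. real k / N > c}"
  have Bsub: "B \<subseteq> {1..N}" by (auto simp: B_def)
  have hF: "binom_F N q0 (k - 1) \<ge> 1 - e" if k: "k \<in> B" for k
  proof -
    have k1: "k \<ge> 1" using k by (auto simp: B_def)
    have eq: "UNIV - {k..} = {..k-1}" using k1 by auto
    have "binom_F N q0 (k - 1) = 1 - measure_pmf.prob (binomial_pmf N q0) {k..}"
      unfolding binom_F_def using measure_pmf.prob_compl[of "{k..}" "binomial_pmf N q0"] eq
      by simp
    moreover have "measure_pmf.prob (binomial_pmf N q0) {k..}
        \<le> measure_pmf.prob (binomial_pmf N q0) {x. x / N \<ge> q0 + d}"
    proof (rule measure_pmf.finite_measure_mono)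
      show "{k..} \<subseteq> {x. real x / real N \<ge> q0 + d}"
      proof
        fix x assume "x \<in> {k..}"
        hence "real k \<le> real x" by simp
        hence "real k / N \<le> real x / N" using N by (simp add: divide_right_mono)
        moreover have "real k / N > c" using k by (simp add: B_def)
        ultimately show "x \<in> {x. real x / real N \<ge> q0 + d}" using d by (simp add: c_def)
      qed
    qed auto
    moreover have "measure_pmf.prob (binomial_pmf N q0) {x. x / N \<ge> q0 + d} \<le> e"
      unfolding e_def using b0.prob_ge'[OF N, of d] d by simp
    ultimately show ?thesis by linarith
  qed
  have hFm: "binom_F N q0 (k - 1) ^ m \<ge> 1 - m * e" if k: "k \<in> B" for k
  proof -
    have F0: "binom_F N q0 (k - 1) \<ge> 0" by (simp add: binom_F_def)
    have "1 + real m * (binom_F N q0 (k - 1) - 1) \<le> (1 + (binom_F N q0 (k - 1) - 1)) ^ m"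
      by (rule Bernoulli_inequality) (use F0 in simp)
    moreover have "real m * (binom_F N q0 (k - 1) - 1) \<ge> real m * (- e)"
      using hF[OF k] by (intro mult_left_mono) auto
    ultimately show ?thesis by simp
  qed
  have PB: "measure_pmf.prob (binomial_pmf N q1) B \<ge> 1 - e"
  proof -
    have "measure_pmf.prob (binomial_pmf N q1) (UNIV - B) =
          measure_pmf.prob (binomial_pmf N q1) ((UNIV - B) \<inter> set_pmf (binomial_pmf N q1))"
      by (simp add: measure_Int_set_pmf)
    also have "\<dots> \<le> measure_pmf.prob (binomial_pmf N q1) {x. x / N \<le> q1 - d}"
    proof (rule measure_pmf.finite_measure_mono)
      have sp: "set_pmf (binomial_pmf N q1) \<subseteq> {..N}"
        using q0 q01 q1 by (auto simp: set_pmf_binomial_eq split: if_splits)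
      show "(UNIV - B) \<inter> set_pmf (binomial_pmf N q1) \<subseteq> {x. real x / real N \<le> q1 - d}"
      proof
        fix x assume x: "x \<in> (UNIV - B) \<inter> set_pmf (binomial_pmf N q1)"
        hence xN: "x \<le> N" using sp by auto
        have cpos: "c > 0" using q0 d by (simp add: c_def)
        have "\<not> (real x / N > c)"
        proof
          assume h: "real x / N > c"
          hence "x \<ge> 1" using cpos by (cases x) auto
          hence "x \<in> B" using xN h by (simp add: B_def)
          thus False using x by auto
        qed
        thus "x \<in> {x. real x / real N \<le> q1 - d}" using c2 d by simp
      qed
    qed auto
    also have "\<dots> \<le> e"
      unfolding e_def using b1.prob_le'[OF N, of d] d by simp
    finally have "measure_pmf.prob (binomial_pmf N q1) (UNIV - B) \<le> e" .
    moreover have "measure_pmf.prob (binomial_pmf N q1) (UNIV - B) = 1 - measure_pmf.prob (binomial_pmf N q1) B"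
      using measure_pmf.prob_compl[of B "binomial_pmf N q1"] by simp
    ultimately show ?thesis by linarith
  qed
  have PBs: "measure_pmf.prob (binomial_pmf N q1) B = (\<Sum>k\<in>B. binom_f N q1 k)"
    unfolding binom_f_def using Bsub by (subst measure_measure_pmf_finite) (auto intro: finite_subset)
  have PB1: "measure_pmf.prob (binomial_pmf N q1) B \<le> 1" by simp
  have "(\<Sum>k\<in>B. binom_f N q1 k * (binom_F N q0 (k - 1)) ^ m)
        \<le> (\<Sum>k=1..N. binom_f N q1 k * (binom_F N q0 (k - 1)) ^ m)"
    using Bsub by (intro sum_mono2) (auto simp: binom_f_def binom_F_def)
  moreover have "(\<Sum>k\<in>B. binom_f N q1 k * (1 - m * e)) \<le> (\<Sum>k\<in>B. binom_f N q1 k * (binom_F N q0 (k - 1)) ^ m)"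
    by (intro sum_mono mult_left_mono hFm) (auto simp: binom_f_def)
  moreover have "(\<Sum>k\<in>B. binom_f N q1 k * (1 - m * e)) = measure_pmf.prob (binomial_pmf N q1) B * (1 - m * e)"
    by (simp add: PBs sum_distrib_right)
  moreover have "measure_pmf.prob (binomial_pmf N q1) B * (1 - m * e) \<ge> measure_pmf.prob (binomial_pmf N q1) B - m * e"
  proof -
    have "measure_pmf.prob (binomial_pmf N q1) B * (m * e) \<le> 1 * (m * e)"
      using PB1 e0 by (intro mult_right_mono) auto
    thus ?thesis by (simp add: algebra_simps)
  qed
  ultimately show ?thesis using PB unfolding e_def d_def by (simp add: algebra_simps)
qed


lemma key_upper:
  fixes q0 q1 :: real and N m :: nat
  shows "(\<Sum>k=1..N. binom_f N q1 k * (binom_F N q0 (k - 1)) ^ m) \<le> 1"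
proof -
  have "(\<Sum>k=1..N. binom_f N q1 k * (binom_F N q0 (k - 1)) ^ m) \<le> (\<Sum>k=1..N. binom_f N q1 k)"
  proof (intro sum_mono)
    fix k
    have "binom_F N q0 (k - 1) ^ m \<le> 1"
      by (intro power_le_one) (auto simp: binom_F_def)
    thus "binom_f N q1 k * binom_F N q0 (k - 1) ^ m \<le> binom_f N q1 k"
      by (intro mult_left_le) (auto simp: binom_f_def)
  qed
  also have "\<dots> = measure_pmf.prob (binomial_pmf N q1) {1..N}"
    unfolding binom_f_def by (simp add: measure_measure_pmf_finite)
  also have "\<dots> \<le> 1" by simp
  finally show ?thesis .
qed

lemma exp_decay:
  fixes a C :: real
  assumes "a > 0"
  shows "(\<lambda>N. (1 + C * real N) * exp (- a * real N)) \<longlonglongrightarrow> 0"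
  using assms by real_asymp

theorem mainTheorem3:
  fixes q0 q1 :: real and NR :: "nat \<Rightarrow> nat"
  assumes "0 \<le> q0" and "q0 < q1" and "q1 \<le> 1"
    and "\<And>N. NR N > 0"
    and "(\<lambda>N. real (NR N)) \<in> O(\<lambda>N. real N)"
  shows "(\<lambda>N. \<Sum>k=1..N. binom_f N q1 k * (binom_F N q0 (k - 1)) ^ (NR N)) \<longlonglongrightarrow> 1"
proof -
  define a where "a = 2 * ((q1 - q0)/4)^2"
  have a: "a > 0" using assms(2) by (simp add: a_def)
  obtain C where C: "eventually (\<lambda>N. norm (real (NR N)) \<le> C * norm (real N)) sequentially"
    using assms(5) by (auto elim!: landau_o.bigE)
  define g where "g = (\<lambda>N::nat. (1 + real (NR N)) * exp (- a * real N))"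
  have g0: "g \<longlonglongrightarrow> 0"
  proof (rule tendsto_sandwich[OF _ _ tendsto_const exp_decay[OF a, of C]])
    show "eventually (\<lambda>N. 0 \<le> g N) sequentially" by (simp add: g_def)
    show "eventually (\<lambda>N. g N \<le> (1 + C * real N) * exp (- a * real N)) sequentially"
      using C by eventually_elim (auto simp: g_def intro!: mult_right_mono)
  qed
  have "(\<lambda>N. 1 - g N) \<longlonglongrightarrow> 1 - 0" by (intro tendsto_intros g0)
  hence lo: "(\<lambda>N. 1 - g N) \<longlonglongrightarrow> 1" by simp
  show ?thesis
  proof (rule tendsto_sandwich[OF _ _ lo tendsto_const])
    show "eventually (\<lambda>N. 1 - g N \<le> (\<Sum>k=1..N. binom_f N q1 k * (binom_F N q0 (k - 1)) ^ (NR N))) sequentially"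
      using eventually_gt_at_top[of 0]
    proof eventually_elim
      case (elim N)
      show ?case using key_lower[OF assms(1-3) elim, of "NR N"] by (simp add: g_def a_def mult_ac)
    qed
    show "eventually (\<lambda>N. (\<Sum>k=1..N. binom_f N q1 k * (binom_F N q0 (k - 1)) ^ (NR N)) \<le> 1) sequentially"
      by (rule always_eventually) (use key_upper in blast)
  qed
qed

end
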